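(* Let $\mathbb{F}$ be a finite field. For every $k\in\mathbb{N}$ there exists a CMSO formula $\mathrm{cc}(X,Z,\langle Y_1\rangle,\dots,\langle Y_k\rangle)$ over $\Sigma_{\mathbb{F}}$ such that for every matrix $A$ over $\mathbb{F}$, all sets $S\subseteq T$ of columns of $A$ and all virtual columns $\langle Q_1\rangle,\dots,\langle Q_k\rangle$ of $\mathcal{S}(A)$, we have $\mathcal{S}(A)\models\mathrm{cc}(S,T,\langle Q_1\rangle,\dots,\langle Q_k\rangle)$ if and only if $S$ is a connected component of the restriction $M(A,\{v(\langle Q_1\rangle),\dots,v(\langle Q_k\rangle)\})[T]$.
   Context: $\Sigma_{\mathbb{F}}$ has unary symbols $R,C$ and binary symbols $\mathrm{Entry}_\alpha$ ($\alpha\in\mathbb{F}$). For a matrix $A$ with rows $r_1,\dots,r_m$, $\mathcal{S}(A)$ has universe rows $\cup$ columns, $R$ = rows, $C$ = columns, $\mathrm{Entry}_\alpha=\{(r,c):A(r,c)=\alpha\}$. CMSO is monadic second-order logic with predicates $\mathrm{mod}_{a,b}(X)$ meaning $|X|\equiv a\pmod b$. A virtual column is a family $\langle Q\rangle=\{Q_\alpha\}_{\alpha\in\mathbb{F}}$ of pairwise disjoint sets of rows covering all rows, with vector $v(\langle Q\rangle)\in\mathbb{F}^m$ whose $i$-th coordinate is $\alpha$ where $r_i\in Q_\alpha$; in formulas it is an $\mathbb{F}$-indexed tuple of set variables. For $v_1,\dots,v_k\in\mathbb{F}^m$, $M(A,\{v_1,\dots,v_k\})$ is the matroid on the columns of $A$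 in which a set $\{u_1,\dots,u_\ell\}$ is dependent iff there exist $\alpha_i$, not all $0$, with $\sum_i\alpha_iu_i\in\mathrm{span}(v_1,\dots,v_k)$. $M[T]$ is the restriction to $T$; a connected component is an inclusion-wise maximal set any two elements of which lie in a common circuit. *)

theory Defs
  imports Main
begin

datatype ('f, 'x, 'v) cmso =
    AtR 'x
  | AtC 'x
  | AtEntry 'f 'x 'x
  | AtEq 'x 'x
  | AtMem 'x 'v
  | ModP nat nat 'v
  | Neg "('f, 'x, 'v) cmso"
  | Conj "('f, 'x, 'v) cmso" "('f, 'x, 'v) cmso"
  | ExFO 'x "('f, 'x, 'v) cmso"
  | ExSO 'v "('f, 'x, 'v) cmso"

record ('f, 'u) sstruct =
  univ :: "'u set"
  relR :: "'u set"
  relC :: "'u set"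
  relEntry :: "'f \<Rightarrow> ('u \<times> 'u) set"

fun sat :: "('f, 'u) sstruct \<Rightarrow> ('x \<Rightarrow> 'u) \<Rightarrow> ('v \<Rightarrow> 'u set) \<Rightarrow> ('f, 'x, 'v) cmso \<Rightarrow> bool" where
  "sat S fo so (AtR x) = (fo x \<in> relR S)"
| "sat S fo so (AtC x) = (fo x \<in> relC S)"
| "sat S fo so (AtEntry a x y) = ((fo x, fo y) \<in> relEntry S a)"
| "sat S fo so (AtEq x y) = (fo x = fo y)"
| "sat S fo so (AtMem x X) = (fo x \<in> so X)"
| "sat S fo so (ModP a b X) = (card (so X) mod b = a mod b)"
| "sat S fo so (Neg \<phi>) = (\<not> sat S fo so \<phi>)"
| "sat S fo so (Conj \<phi> \<psi>) = (sat S fo so \<phi> \<and> sat S fo so \<psi>)"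
| "sat S fo so (ExFO x \<phi>) = (\<exists>u\<in>univ S. sat S (fo(x := u)) so \<phi>)"
| "sat S fo so (ExSO X \<phi>) = (\<exists>U. U \<subseteq> univ S \<and> sat S fo (so(X := U)) \<phi>)"

text \<open>An m x n matrix over 'f is given by m, n and A :: nat => nat => 'f
  (entries A i j for i < m, j < n; other values are irrelevant).
  Rows and columns are the distinct elements Row i and Col j.\<close>

datatype elt = Row nat | Col nat

definition rows :: "nat \<Rightarrow> elt set" where "rows m = Row ` {..<m}"
definition cols :: "nat \<Rightarrow> elt set" where "cols n = Col ` {..<n}"

definition matStruct :: "nat \<Rightarrow> nat \<Rightarrow> (nat \<Rightarrow> nat \<Rightarrow> 'f) \<Rightarrow> ('f, elt) sstruct" where
  "matStruct m n A = \<lparr> univ = rows m \<union> cols n, relR = rows m, relC = cols n,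
     relEntry = (\<lambda>a. {(Row i, Col j) | i j. i < m \<and> j < n \<and> A i j = a}) \<rparr>"

definition virtual_column :: "nat \<Rightarrow> ('f \<Rightarrow> elt set) \<Rightarrow> bool" where
  "virtual_column m Q \<longleftrightarrow>
     (\<forall>a b. a \<noteq> b \<longrightarrow> Q a \<inter> Q b = {}) \<and> (\<Union>a. Q a) = rows m"

definition vvec :: "('f \<Rightarrow> elt set) \<Rightarrow> nat \<Rightarrow> 'f" where
  "vvec Q i = (THE a. Row i \<in> Q a)"

definition colvec :: "(nat \<Rightarrow> nat \<Rightarrow> 'f::zero) \<Rightarrow> elt \<Rightarrow> nat \<Rightarrow> 'f" where
  "colvec A c i = (case c of Col j \<Rightarrow> A i j | Row _ \<Rightarrow> 0)"

definition in_span :: "nat \<Rightarrow> nat \<Rightarrow> (nat \<Rightarrow> nat \<Rightarrow> 'f::field) \<Rightarrow> (nat \<Rightarrow> 'f) \<Rightarrow> bool" where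
  "in_span m k vs w \<longleftrightarrow> (\<exists>\<beta>. \<forall>i<m. w i = (\<Sum>t<k. \<beta> t * vs t i))"

definition mdep :: "nat \<Rightarrow> (nat \<Rightarrow> nat \<Rightarrow> 'f::field) \<Rightarrow> nat \<Rightarrow> (nat \<Rightarrow> nat \<Rightarrow> 'f) \<Rightarrow> elt set \<Rightarrow> bool" where
  "mdep m A k vs U \<longleftrightarrow>
     (\<exists>c. (\<exists>u\<in>U. c u \<noteq> 0) \<and> in_span m k vs (\<lambda>i. \<Sum>u\<in>U. c u * colvec A u i))"

definition mcircuit :: "nat \<Rightarrow> nat \<Rightarrow> (nat \<Rightarrow> nat \<Rightarrow> 'f::field) \<Rightarrow> nat \<Rightarrow> (nat \<Rightarrow> nat \<Rightarrow> 'f)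
    \<Rightarrow> elt set \<Rightarrow> elt set \<Rightarrow> bool" where
  "mcircuit m n A k vs T D \<longleftrightarrow> D \<subseteq> T \<and> D \<subseteq> cols n \<and> mdep m A k vs D \<and>
     (\<forall>D'. D' \<subset> D \<longrightarrow> \<not> mdep m A k vs D')"

definition mconnected :: "nat \<Rightarrow> nat \<Rightarrow> (nat \<Rightarrow> nat \<Rightarrow> 'f::field) \<Rightarrow> nat \<Rightarrow> (nat \<Rightarrow> nat \<Rightarrow> 'f)
    \<Rightarrow> elt set \<Rightarrow> elt set \<Rightarrow> bool" where
  "mconnected m n A k vs T X \<longleftrightarrow>
     (\<forall>x\<in>X. \<forall>y\<in>X. x = y \<or> (\<exists>D. mcircuit m n A k vs T D \<and> x \<in> D \<and> y \<in> D))"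

definition conn_component :: "nat \<Rightarrow> nat \<Rightarrow> (nat \<Rightarrow> nat \<Rightarrow> 'f::field) \<Rightarrow> nat \<Rightarrow> (nat \<Rightarrow> nat \<Rightarrow> 'f)
    \<Rightarrow> elt set \<Rightarrow> elt set \<Rightarrow> bool" where
  "conn_component m n A k vs T S \<longleftrightarrow>
     S \<noteq> {} \<and> S \<subseteq> T \<and> mconnected m n A k vs T S \<and>
     (\<forall>S'. S \<subseteq> S' \<and> S' \<subseteq> T \<and> mconnected m n A k vs T S' \<longrightarrow> S' = S)"

text \<open>VX, VZ: the free variables X, Z; VY i a: component Y_{i+1,a} of the virtual
  column variable <Y_{i+1}>; VB j: further (bound) set variables.\<close>
datatype 'f ccvar = VX | VZ | VY nat 'f | VB nat

end

theory Submission
  imports Defs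
begin


definition lst :: "'a set \<Rightarrow> 'a list" where
  "lst Z = (SOME xs. set xs = Z \<and> distinct xs)"

lemma lst: "finite Z \<Longrightarrow> set (lst Z) = Z \<and> distinct (lst Z)"
  unfolding lst_def by (rule someI_ex) (rule finite_distinct_list)

definition TT :: "('f,nat,'v) cmso" where "TT = AtEq 0 0"
definition FF :: "('f,nat,'v) cmso" where "FF = Neg TT"
definition Disj where "Disj a b = Neg (Conj (Neg a) (Neg b))"
definition Imp where "Imp a b = Neg (Conj a (Neg b))"
definition Iff where "Iff a b = Conj (Imp a b) (Imp b a)"
definition AllFO where "AllFO x p = Neg (ExFO x (Neg p))"
definition AllSO where "AllSO x p = Neg (ExSO x (Neg p))"
fun BigOr :: "('f,nat,'v) cmso list \<Rightarrow> ('f,nat,'v) cmso" where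
  "BigOr [] = FF" | "BigOr (p # ps) = Disj p (BigOr ps)"
fun BigAnd :: "('f,nat,'v) cmso list \<Rightarrow> ('f,nat,'v) cmso" where
  "BigAnd [] = TT" | "BigAnd (p # ps) = Conj p (BigAnd ps)"
fun ExSOs where
  "ExSOs [] p = p" | "ExSOs (X # Xs) p = ExSO X (ExSOs Xs p)"

lemma sat_TT[simp]: "sat S fo so TT" by (simp add: TT_def)
lemma sat_FF[simp]: "\<not> sat S fo so FF" by (simp add: FF_def)
lemma sat_Disj[simp]: "sat S fo so (Disj a b) = (sat S fo so a \<or> sat S fo so b)" by (simp add: Disj_def)
lemma sat_Imp[simp]: "sat S fo so (Imp a b) = (sat S fo so a \<longrightarrow> sat S fo so b)" by (simp add: Imp_def)
lemma sat_Iff[simp]: "sat S fo so (Iff a b) = (sat S fo so a \<longleftrightarrow> sat S fo so b)" by (auto simp add: Iff_def)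
lemma sat_AllFO[simp]: "sat S fo so (AllFO x p) = (\<forall>u\<in>univ S. sat S (fo(x:=u)) so p)" by (simp add: AllFO_def)
lemma sat_AllSO[simp]: "sat S fo so (AllSO x p) = (\<forall>U. U \<subseteq> univ S \<longrightarrow> sat S fo (so(x:=U)) p)" by (simp add: AllSO_def)
lemma sat_BigOr[simp]: "sat S fo so (BigOr ps) = (\<exists>p\<in>set ps. sat S fo so p)" by (induction ps) auto
lemma sat_BigAnd[simp]: "sat S fo so (BigAnd ps) = (\<forall>p\<in>set ps. sat S fo so p)" by (induction ps) auto

lemma sat_ExSOs: "distinct Xs \<Longrightarrow> sat S fo so (ExSOs Xs p) =
  (\<exists>G. (\<forall>X\<in>set Xs. G X \<subseteq> univ S) \<and> sat S fo (\<lambda>v. if v \<in> set Xs then G v else so v) p)"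
proof (induction Xs arbitrary: so)
  case Nil
  then show ?case by (simp cong: if_cong)
next
  case (Cons X Xs)
  have *: "\<And>G U. (\<lambda>v. if v \<in> set Xs then G v else (so(X:=U)) v) = (\<lambda>v. if v \<in> set (X#Xs) then (G(X:=U)) v else so v)"
    using Cons.prems by (auto simp: fun_eq_iff)
  show ?case
  proof
    assume "sat S fo so (ExSOs (X # Xs) p)"
    then obtain U G where "U \<subseteq> univ S" "\<forall>Y\<in>set Xs. G Y \<subseteq> univ S"
       "sat S fo (\<lambda>v. if v \<in> set Xs then G v else (so(X:=U)) v) p"
      using Cons by auto
    then have "sat S fo (\<lambda>v. if v \<in> set (X#Xs) then (G(X:=U)) v else so v) p" unfolding * by simp
    then show "\<exists>G. (\<forall>X\<in>set (X#Xs). G X \<subseteq> univ S) \<and> sat S fo (\<lambda>v. if v \<in> set (X#Xs) then G v else so v) p"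
      using \<open>U \<subseteq> univ S\<close> \<open>\<forall>Y\<in>set Xs. G Y \<subseteq> univ S\<close> by (intro exI[of _ "G(X:=U)"]) auto
  next
    assume "\<exists>G. (\<forall>X\<in>set (X#Xs). G X \<subseteq> univ S) \<and> sat S fo (\<lambda>v. if v \<in> set (X#Xs) then G v else so v) p"
    then obtain G where G: "\<forall>X\<in>set (X#Xs). G X \<subseteq> univ S" "sat S fo (\<lambda>v. if v \<in> set (X#Xs) then G v else so v) p" by blast
    have "sat S fo (\<lambda>v. if v \<in> set Xs then G v else (so(X:=G X)) v) p" unfolding *[of G "G X"] fun_upd_triv using G(2) by simp
    then show "sat S fo so (ExSOs (X # Xs) p)" using Cons G(1) by auto
  qed
qed

lemma char_exists: "\<exists>d>0. of_nat d = (0::'f::{finite,ring_1})"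
proof -
  have "\<not> inj (of_nat :: nat \<Rightarrow> 'f)"
    using finite_imageD[of "of_nat :: nat \<Rightarrow> 'f" UNIV] by auto
  then obtain a0 b0 where ab0: "a0 \<noteq> b0" "of_nat a0 = (of_nat b0 :: 'f)"
    unfolding inj_def by blast
  obtain a b where ab: "a < b" "of_nat a = (of_nat b :: 'f)"
  proof (cases "a0 < b0")
    case True then show ?thesis using ab0 that by blast
  next
    case False then have "b0 < a0" using ab0 by simp
    then show ?thesis using ab0 that[of b0 a0] by simp
  qed
  have "b = a + (b - a)" using ab(1) by simp
  then have "(of_nat b :: 'f) = of_nat a + of_nat (b - a)"
    by (metis of_nat_add)
  then show ?thesis using ab by (intro exI[of _ "b - a"]) auto
qed

lemma of_nat_mod_d: "of_nat d = (0::'f::semiring_1) \<Longrightarrow> of_nat (x mod d) = (of_nat x :: 'f)"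
proof -
  assume d: "of_nat d = (0::'f)"
  have "(of_nat x :: 'f) = of_nat (d * (x div d) + x mod d)" by simp
  also have "\<dots> = of_nat (x mod d)" unfolding of_nat_add of_nat_mult d by simp
  finally show ?thesis by simp
qed

lemma sum_group:
  fixes f :: "'b::finite \<Rightarrow> 'f::comm_semiring_1"
  assumes "finite U"
  shows "(\<Sum>u\<in>U. f (h u)) = (\<Sum>z\<in>UNIV. f z * of_nat (card {u\<in>U. h u = z}))"
proof -
  have "(\<Sum>u\<in>U. f (h u)) = (\<Sum>z\<in>h ` U. \<Sum>u\<in>{u\<in>U. h u = z}. f (h u))"
    by (rule sum.image_gen[OF assms])
  also have "\<dots> = (\<Sum>z\<in>h ` U. f z * of_nat (card {u\<in>U. h u = z}))"
    by (intro sum.cong refl) (simp add: mult.commute)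
  also have "\<dots> = (\<Sum>z\<in>UNIV. f z * of_nat (card {u\<in>U. h u = z}))"
  proof -
    have z0: "f z * of_nat (card {u\<in>U. h u = z}) = 0" if "z \<notin> h ` U" for z
    proof -
      have e: "{u\<in>U. h u = z} = {}" using that by auto
      show ?thesis unfolding e by simp
    qed
    show ?thesis by (rule sum.mono_neutral_left) (simp, simp, use z0 in blast)
  qed
  finally show ?thesis .
qed



lemma ms_univ[simp]: "univ (matStruct m n A) = rows m \<union> cols n" by (simp add: matStruct_def)
lemma ms_R[simp]: "relR (matStruct m n A) = rows m" by (simp add: matStruct_def)
lemma ms_C[simp]: "relC (matStruct m n A) = cols n" by (simp add: matStruct_def)
lemma ms_E[simp]: "relEntry (matStruct m n A) b = {(Row i, Col j) | i j. i < m \<and> j < n \<and> A i j = b}"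
  by (simp add: matStruct_def)

lemma vc_iff: assumes "virtual_column m Q" "i < m" shows "Row i \<in> Q g \<longleftrightarrow> vvec Q i = g"
proof -
  have "Row i \<in> rows m" using assms(2) by (simp add: rows_def)
  then obtain a where a: "Row i \<in> Q a" using assms(1) unfolding virtual_column_def by blast
  have uniq: "\<And>b. Row i \<in> Q b \<Longrightarrow> b = a" using assms(1) a unfolding virtual_column_def by blast
  have "vvec Q i = a" unfolding vvec_def using a uniq by (rule the_equality)
  then show ?thesis using a uniq by blast
qed

definition Count :: "nat \<Rightarrow> nat \<Rightarrow> 'f ccvar \<Rightarrow> nat \<Rightarrow> 'f \<Rightarrow> 'f \<Rightarrow> nat \<Rightarrow> ('f,nat,'f ccvar) cmso" where
  "Count k d U x a b r = ExSO (VB 0) (Conj (AllFO 4 (Iff (AtMem 4 (VB 0))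
      (Conj (AtMem 4 U) (Conj (AtMem 4 (VY k a)) (AtEntry b x 4))))) (ModP r d (VB 0)))"

lemma sat_Count:
  assumes "x \<noteq> 4" "U \<noteq> VB 0"
  shows "sat S fo so (Count k d U x a b r) \<longleftrightarrow>
    card {u\<in>univ S. u \<in> so U \<and> u \<in> so (VY k a) \<and> (fo x, u) \<in> relEntry S b} mod d = r mod d"
proof -
  let ?W = "{u\<in>univ S. u \<in> so U \<and> u \<in> so (VY k a) \<and> (fo x, u) \<in> relEntry S b}"
  have "sat S fo so (Count k d U x a b r) \<longleftrightarrow>
    (\<exists>W. W \<subseteq> univ S \<and> (\<forall>u\<in>univ S. u \<in> W \<longleftrightarrow> u \<in> so U \<and> u \<in> so (VY k a) \<and> (fo x, u) \<in> relEntry S b)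
       \<and> card W mod d = r mod d)"
    using assms by (simp add: Count_def)
  also have "\<dots> \<longleftrightarrow> card ?W mod d = r mod d"
  proof
    assume "\<exists>W. W \<subseteq> univ S \<and> (\<forall>u\<in>univ S. u \<in> W \<longleftrightarrow> u \<in> so U \<and> u \<in> so (VY k a) \<and> (fo x, u) \<in> relEntry S b)
       \<and> card W mod d = r mod d"
    then obtain W where W: "W \<subseteq> univ S" "\<forall>u\<in>univ S. u \<in> W \<longleftrightarrow> u \<in> so U \<and> u \<in> so (VY k a) \<and> (fo x, u) \<in> relEntry S b"
       "card W mod d = r mod d" by blast
    have "W = ?W" using W(1,2) by blast
    then show "card ?W mod d = r mod d" using W(3) by simp
  qed (intro exI[of _ ?W]; auto)
  finally show ?thesis .
qed

definition Fk :: "nat \<Rightarrow> (nat \<Rightarrow> 'f::zero) set" where "Fk k = {g. \<forall>t. k \<le> t \<longrightarrow> g t = 0}"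
definition Rd :: "nat \<Rightarrow> ('f \<times> 'f \<Rightarrow> nat) set" where "Rd d = {r. \<forall>z. r z < d}"

lemma finite_Fk: "finite (Fk k :: (nat \<Rightarrow> 'f::{zero,finite}) set)"
proof -
  have "Fk k = {f :: nat \<Rightarrow> 'f. \<forall>x. (x \<in> {..<k} \<longrightarrow> f x \<in> UNIV) \<and> (x \<notin> {..<k} \<longrightarrow> f x = 0)}"
    by (auto simp: Fk_def)
  then show ?thesis using finite_set_of_finite_funs[of "{..<k}" "UNIV :: 'f set" 0] by simp
qed

lemma finite_Rd: "finite (Rd d :: ('f::finite \<times> 'f \<Rightarrow> nat) set)"
proof -
  have "finite {f :: 'f \<times> 'f \<Rightarrow> nat. \<forall>x. (x \<in> UNIV \<longrightarrow> f x \<in> {..<d}) \<and> (x \<notin> UNIV \<longrightarrow> f x = 0)}"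
    by (rule finite_set_of_finite_funs) auto
  then show ?thesis unfolding Rd_def by simp
qed

definition Good :: "nat \<Rightarrow> nat \<Rightarrow> (nat \<Rightarrow> 'f::{finite,field}) \<Rightarrow> (('f \<times> 'f \<Rightarrow> nat) \<times> (nat \<Rightarrow> 'f)) set" where
  "Good k d \<beta> = {(r, \<gamma>). r \<in> Rd d \<and> \<gamma> \<in> Fk k \<and>
      (\<Sum>z\<in>UNIV. fst z * snd z * of_nat (r z)) = (\<Sum>t<k. \<beta> t * \<gamma> t)}"

lemma finite_Good: "finite (Good k d \<beta>)"
  by (rule finite_subset[of _ "Rd d \<times> Fk k"]) (auto simp: Good_def finite_Rd finite_Fk)

definition RowEq :: "nat \<Rightarrow> nat \<Rightarrow> 'f::{finite,field} ccvar \<Rightarrow> nat \<Rightarrow> (nat \<Rightarrow> 'f) \<Rightarrow> ('f,nat,'f ccvar) cmso" where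
  "RowEq k d U x \<beta> = BigOr (map (\<lambda>p. Conj (BigAnd (map (\<lambda>t. AtMem x (VY t (snd p t))) [0..<k]))
       (BigAnd (map (\<lambda>z. Count k d U x (fst z) (snd z) (fst p z)) (lst UNIV)))) (lst (Good k d \<beta>)))"

lemma ball_upt0: "(\<forall>t\<in>{0..<k::nat}. P t) = (\<forall>t<k. P t)" by auto

lemma sat_RowEq:
  fixes \<beta> :: "nat \<Rightarrow> 'f::{finite,field}"
  assumes "x \<noteq> 4" "U \<noteq> VB 0"
  shows "sat S fo so (RowEq k d U x \<beta>) \<longleftrightarrow> (\<exists>p\<in>Good k d \<beta>. (\<forall>t<k. fo x \<in> so (VY t (snd p t))) \<and>
     (\<forall>z. card {u\<in>univ S. u \<in> so U \<and> u \<in> so (VY k (fst z)) \<and> (fo x, u) \<in> relEntry S (snd z)} mod d = fst p z mod d))"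
  using assms lst[OF finite_Good[of k d \<beta>], THEN conjunct1] lst[OF finite_UNIV[where 'a="'f\<times>'f"], THEN conjunct1]
  by (simp add: RowEq_def sat_Count ball_upt0)



lemma row_sem:
  fixes A :: "nat \<Rightarrow> nat \<Rightarrow> 'f::{finite,field}" and \<beta> :: "nat \<Rightarrow> 'f"
  assumes d: "of_nat d = (0::'f)" "d > 0"
  and i: "i < m"
  and U: "so U \<subseteq> cols n" "U \<noteq> VB 0"
  and cP: "\<forall>u\<in>rows m \<union> cols n. \<forall>a. u \<in> so (VY k a) \<longleftrightarrow> c u = a"
  and Q: "\<forall>t<k. virtual_column m (Q t)" "\<forall>t<k. \<forall>a. so (VY t a) = Q t a"
  shows "sat (matStruct m n A) (fo(2:=Row i)) so (RowEq k d U 2 \<beta>) \<longleftrightarrow>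
     (\<Sum>u\<in>so U. c u * colvec A u i) = (\<Sum>t<k. \<beta> t * vvec (Q t) i)"
proof -
  define N where "N z = card {u\<in>rows m \<union> cols n. u \<in> so U \<and> u \<in> so (VY k (fst z)) \<and>
      (Row i, u) \<in> relEntry (matStruct m n A) (snd z)}" for z
  have setN: "{u\<in>rows m \<union> cols n. u \<in> so U \<and> u \<in> so (VY k (fst z)) \<and>
      (Row i, u) \<in> relEntry (matStruct m n A) (snd z)} = {u\<in>so U. (c u, colvec A u i) = z}" for z
  proof (rule set_eqI)
    fix u
    show "u \<in> {u\<in>rows m \<union> cols n. u \<in> so U \<and> u \<in> so (VY k (fst z)) \<and>
      (Row i, u) \<in> relEntry (matStruct m n A) (snd z)} \<longleftrightarrow> u \<in> {u\<in>so U. (c u, colvec A u i) = z}"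
    proof (cases "u \<in> so U")
      case True
      then obtain j where j: "u = Col j" "j < n" using U(1) by (auto simp: cols_def)
      have "u \<in> rows m \<union> cols n" using j by (simp add: cols_def)
      then have "u \<in> so (VY k (fst z)) \<longleftrightarrow> c u = fst z" using cP by blast
      then show ?thesis using True j i by (cases z) (auto simp: colvec_def cols_def)
    next
      case False
      then show ?thesis by simp
    qed
  qed
  have Nz: "N z = card {u\<in>so U. (c u, colvec A u i) = z}" for z unfolding N_def setN ..
  have fin: "finite (so U)" using U(1) by (rule finite_subset) (simp add: cols_def)
  have "(\<Sum>u\<in>so U. c u * colvec A u i) = (\<Sum>z\<in>UNIV. fst z * snd z * of_nat (N z))"
    using sum_group[OF fin, of "\<lambda>z. fst z * snd z" "\<lambda>u. (c u, colvec A u i)"] by (simp add: Nz)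
  also have "\<dots> = (\<Sum>z\<in>UNIV. fst z * snd z * of_nat (N z mod d))" by (simp add: of_nat_mod_d[OF d(1)])
  finally have sumeq: "(\<Sum>u\<in>so U. c u * colvec A u i) = (\<Sum>z\<in>UNIV. fst z * snd z * of_nat (N z mod d))" .
  have vv: "\<And>t g. t < k \<Longrightarrow> Row i \<in> so (VY t g) \<longleftrightarrow> vvec (Q t) i = g" 
  proof -
    fix t g assume t: "t < k"
    show "Row i \<in> so (VY t g) \<longleftrightarrow> vvec (Q t) i = g"
      using vc_iff[OF Q(1)[rule_format, OF t] i] Q(2) t by simp
  qed
  have lhs: "sat (matStruct m n A) (fo(2:=Row i)) so (RowEq k d U 2 \<beta>) \<longleftrightarrow>
     (\<exists>p\<in>Good k d \<beta>. (\<forall>t<k. Row i \<in> so (VY t (snd p t))) \<and> (\<forall>z. N z mod d = fst p z mod d))"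
    by (simp add: sat_RowEq[OF _ U(2)] N_def)
  show ?thesis unfolding lhs
  proof
    assume "\<exists>p\<in>Good k d \<beta>. (\<forall>t<k. Row i \<in> so (VY t (snd p t))) \<and> (\<forall>z. N z mod d = fst p z mod d)"
    then obtain r \<gamma> where p: "(r, \<gamma>) \<in> Good k d \<beta>" "\<forall>t<k. Row i \<in> so (VY t (\<gamma> t))" "\<forall>z. N z mod d = r z mod d"
      by auto
    have r: "r \<in> Rd d" and sr: "(\<Sum>z\<in>UNIV. fst z * snd z * of_nat (r z)) = (\<Sum>t<k. \<beta> t * \<gamma> t)"
      using p(1) by (auto simp: Good_def)
    have "N z mod d = r z" for z
    proof -
      have "r z < d" using r by (simp add: Rd_def del: split_paired_All)
      then show ?thesis using p(3) by (simp del: split_paired_All)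
    qed
    then have "(\<Sum>u\<in>so U. c u * colvec A u i) = (\<Sum>t<k. \<beta> t * \<gamma> t)" using sumeq sr by simp
    also have "\<dots> = (\<Sum>t<k. \<beta> t * vvec (Q t) i)"
      using p(2) vv by (intro sum.cong) auto
    finally show "(\<Sum>u\<in>so U. c u * colvec A u i) = (\<Sum>t<k. \<beta> t * vvec (Q t) i)" .
  next
    assume eq: "(\<Sum>u\<in>so U. c u * colvec A u i) = (\<Sum>t<k. \<beta> t * vvec (Q t) i)"
    define \<gamma> where "\<gamma> t = (if t < k then vvec (Q t) i else 0)" for t
    define r where "r z = N z mod d" for z
    have "(\<Sum>t<k. \<beta> t * vvec (Q t) i) = (\<Sum>t<k. \<beta> t * \<gamma> t)" by (intro sum.cong) (auto simp: \<gamma>_def)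
    then have "(r, \<gamma>) \<in> Good k d \<beta>" using eq sumeq d(2)
      by (auto simp: Good_def Rd_def Fk_def r_def \<gamma>_def)
    moreover have "\<forall>t<k. Row i \<in> so (VY t (\<gamma> t))" using vv by (simp add: \<gamma>_def)
    moreover have "\<forall>z. N z mod d = r z mod d" by (simp add: r_def)
    ultimately show "\<exists>p\<in>Good k d \<beta>. (\<forall>t<k. Row i \<in> so (VY t (snd p t))) \<and> (\<forall>z. N z mod d = fst p z mod d)"
      by (intro bexI[of _ "(r, \<gamma>)"]) auto
  qed
qed



definition Span :: "nat \<Rightarrow> nat \<Rightarrow> 'f::{finite,field} ccvar \<Rightarrow> ('f,nat,'f ccvar) cmso" where
  "Span k d U = BigOr (map (\<lambda>\<beta>. AllFO 2 (Imp (AtR 2) (RowEq k d U 2 \<beta>))) (lst (Fk k)))"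

lemma span_sem:
  fixes A :: "nat \<Rightarrow> nat \<Rightarrow> 'f::{finite,field}"
  assumes d: "of_nat d = (0::'f)" "d > 0"
  and U: "so U \<subseteq> cols n" "U \<noteq> VB 0"
  and cP: "\<forall>u\<in>rows m \<union> cols n. \<forall>a. u \<in> so (VY k a) \<longleftrightarrow> c u = a"
  and Q: "\<forall>t<k. virtual_column m (Q t)" "\<forall>t<k. \<forall>a. so (VY t a) = Q t a"
  shows "sat (matStruct m n A) fo so (Span k d U) \<longleftrightarrow>
     in_span m k (\<lambda>t. vvec (Q t)) (\<lambda>i. \<Sum>u\<in>so U. c u * colvec A u i)"
proof -
  have "sat (matStruct m n A) fo so (Span k d U) \<longleftrightarrow>
     (\<exists>\<beta>\<in>Fk k. \<forall>i<m. sat (matStruct m n A) (fo(2:=Row i)) so (RowEq k d U 2 \<beta>))"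
  proof -
    have r: "(\<forall>x\<in>rows m \<union> cols n. x \<in> rows m \<longrightarrow> P x) \<longleftrightarrow> (\<forall>i<m. P (Row i))" for P
      by (auto simp: rows_def)
    show ?thesis
      using lst[OF finite_Fk[where 'f='f], THEN conjunct1] by (simp add: Span_def r)
  qed
  also have "\<dots> \<longleftrightarrow> (\<exists>\<beta>\<in>Fk k. \<forall>i<m. (\<Sum>u\<in>so U. c u * colvec A u i) = (\<Sum>t<k. \<beta> t * vvec (Q t) i))"
    using row_sem[OF d _ U cP Q] by simp
  also have "\<dots> \<longleftrightarrow> in_span m k (\<lambda>t. vvec (Q t)) (\<lambda>i. \<Sum>u\<in>so U. c u * colvec A u i)"
    unfolding in_span_def
  proof
    assume "\<exists>\<beta>. \<forall>i<m. (\<Sum>u\<in>so U. c u * colvec A u i) = (\<Sum>t<k. \<beta> t * vvec (Q t) i)"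
    then obtain \<beta> where b: "\<forall>i<m. (\<Sum>u\<in>so U. c u * colvec A u i) = (\<Sum>t<k. \<beta> t * vvec (Q t) i)" by blast
    define \<beta>' where "\<beta>' t = (if t < k then \<beta> t else 0)" for t
    have "\<beta>' \<in> Fk k" by (simp add: Fk_def \<beta>'_def)
    moreover have "(\<Sum>t<k. \<beta> t * vvec (Q t) i) = (\<Sum>t<k. \<beta>' t * vvec (Q t) i)" for i
      by (intro sum.cong) (auto simp: \<beta>'_def)
    ultimately show "\<exists>\<beta>\<in>Fk k. \<forall>i<m. (\<Sum>u\<in>so U. c u * colvec A u i) = (\<Sum>t<k. \<beta> t * vvec (Q t) i)"
      using b by metis
  qed blast
  finally show ?thesis .
qed

definition Partition :: "nat \<Rightarrow> ('f::finite,nat,'f ccvar) cmso" where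
  "Partition k = Conj (AllFO 3 (BigOr (map (\<lambda>a. AtMem 3 (VY k a)) (lst UNIV))))
     (AllFO 3 (BigAnd (map (\<lambda>p. Neg (Conj (AtMem 3 (VY k (fst p))) (AtMem 3 (VY k (snd p)))))
        (lst {p. fst p \<noteq> snd p}))))"

lemma sat_Partition:
  "sat S fo so (Partition k :: ('f::finite,nat,'f ccvar) cmso) \<longleftrightarrow> (\<forall>u\<in>univ S. \<exists>a. u \<in> so (VY k a)) \<and>
     (\<forall>u\<in>univ S. \<forall>a b. a \<noteq> b \<longrightarrow> \<not> (u \<in> so (VY k a) \<and> u \<in> so (VY k b)))"
proof -
  have f: "finite {p :: 'f \<times> 'f. fst p \<noteq> snd p}" by simp
  show ?thesis
    using lst[OF finite_UNIV[where 'a='f], THEN conjunct1] lst[OF f, THEN conjunct1]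
    by (auto simp: Partition_def)
qed

definition Nontriv :: "nat \<Rightarrow> 'f::{finite,zero} ccvar \<Rightarrow> ('f,nat,'f ccvar) cmso" where
  "Nontriv k U = ExFO 3 (Conj (AtMem 3 U) (BigOr (map (\<lambda>a. AtMem 3 (VY k a)) (lst (UNIV - {0})))))"

lemma sat_Nontriv:
  "sat S fo so (Nontriv k U :: ('f::{finite,zero},nat,'f ccvar) cmso) \<longleftrightarrow>
     (\<exists>u\<in>univ S. u \<in> so U \<and> (\<exists>a. a \<noteq> 0 \<and> u \<in> so (VY k a)))"
proof -
  have f: "finite (UNIV - {0::'f})" by simp
  show ?thesis
    using lst[OF f, THEN conjunct1] by (auto simp: Nontriv_def)
qed

definition Dep :: "nat \<Rightarrow> nat \<Rightarrow> 'f::{finite,field} ccvar \<Rightarrow> ('f,nat,'f ccvar) cmso" where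
  "Dep k d U = ExSOs (map (VY k) (lst UNIV)) (Conj (Partition k) (Conj (Nontriv k U) (Span k d U)))"

lemma dep_sem:
  fixes A :: "nat \<Rightarrow> nat \<Rightarrow> 'f::{finite,field}"
  assumes d: "of_nat d = (0::'f)" "d > 0"
  and U: "so U \<subseteq> cols n" "U \<noteq> VB 0" "\<forall>a. U \<noteq> VY k a"
  and Q: "\<forall>t<k. virtual_column m (Q t)" "\<forall>t<k. \<forall>a. so (VY t a) = Q t a"
  shows "sat (matStruct m n A) fo so (Dep k d U) \<longleftrightarrow> mdep m A k (\<lambda>t. vvec (Q t)) (so U)"
proof -
  let ?S = "matStruct m n A"
  have dist: "distinct (map (VY k) (lst (UNIV :: 'f set)))"
    using lst[OF finite_UNIV[where 'a='f]] by (simp add: distinct_map inj_on_def)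
  have setX: "set (map (VY k) (lst (UNIV :: 'f set))) = range (VY k)"
    using lst[OF finite_UNIV[where 'a='f]] by simp
  define so' where "so' G = (\<lambda>v. if v \<in> range (VY k) then G v else so v)" for G :: "'f ccvar \<Rightarrow> elt set"
  have so'1: "so' G (VY k a) = G (VY k a)" for G a by (simp add: so'_def)
  have so'2: "so' G U = so U" for G using U(3) by (auto simp: so'_def)
  have so'3: "\<forall>t<k. \<forall>a. so' G (VY t a) = Q t a" for G using Q(2) by (auto simp: so'_def)
  have "sat ?S fo so (Dep k d U) \<longleftrightarrow> (\<exists>G. (\<forall>X\<in>range (VY k). G X \<subseteq> univ ?S) \<and>
     sat ?S fo (so' G) (Conj (Partition k) (Conj (Nontriv k U) (Span k d U))))"
    unfolding Dep_def sat_ExSOs[OF dist] setX so'_def ..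
  also have "\<dots> \<longleftrightarrow> mdep m A k (\<lambda>t. vvec (Q t)) (so U)"
  proof
    assume "\<exists>G. (\<forall>X\<in>range (VY k). G X \<subseteq> univ ?S) \<and>
     sat ?S fo (so' G) (Conj (Partition k) (Conj (Nontriv k U) (Span k d U)))"
    then obtain G where G: "sat ?S fo (so' G) (Partition k)" "sat ?S fo (so' G) (Nontriv k U)"
       "sat ?S fo (so' G) (Span k d U)" by auto
    have P1: "\<forall>u\<in>rows m \<union> cols n. \<exists>a. u \<in> G (VY k a)"
     and P2: "\<forall>u\<in>rows m \<union> cols n. \<forall>a b. a \<noteq> b \<longrightarrow> \<not> (u \<in> G (VY k a) \<and> u \<in> G (VY k b))"
      using G(1) unfolding sat_Partition so'1 by auto
    define c where "c u = (THE a. u \<in> G (VY k a))" for u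
    have cP: "\<forall>u\<in>rows m \<union> cols n. \<forall>a. u \<in> so' G (VY k a) \<longleftrightarrow> c u = a"
    proof (intro ballI allI)
      fix u a assume u: "u \<in> rows m \<union> cols n"
      then obtain b where b: "u \<in> G (VY k b)" using P1 by blast
      have "c u = b" unfolding c_def using b P2 u by (intro the_equality) auto
      then show "u \<in> so' G (VY k a) \<longleftrightarrow> c u = a" using b P2 u unfolding so'1 by auto
    qed
    have nt: "\<exists>u\<in>so U. c u \<noteq> 0"
    proof -
      obtain u a where u: "u \<in> rows m \<union> cols n" "u \<in> so U" "a \<noteq> 0" "u \<in> so' G (VY k a)"
        using G(2) unfolding sat_Nontriv so'2 by auto
      then have "c u = a" using cP by blast
      then show ?thesis using u by blast
    qed
    have "in_span m k (\<lambda>t. vvec (Q t)) (\<lambda>i. \<Sum>u\<in>so U. c u * colvec A u i)"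
      using G(3) span_sem[OF d _ U(2) cP Q(1) so'3, where A=A and fo=fo] U(1) so'2 by simp
    then show "mdep m A k (\<lambda>t. vvec (Q t)) (so U)" unfolding mdep_def using nt by blast
  next
    assume "mdep m A k (\<lambda>t. vvec (Q t)) (so U)"
    then obtain c where nt: "\<exists>u\<in>so U. c u \<noteq> 0"
      and sp: "in_span m k (\<lambda>t. vvec (Q t)) (\<lambda>i. \<Sum>u\<in>so U. c u * colvec A u i)"
      unfolding mdep_def by blast
    define G where "G v = (case v of VY _ a \<Rightarrow> {u\<in>rows m \<union> cols n. c u = a} | _ \<Rightarrow> {})" for v
    have G1: "so' G (VY k a) = {u\<in>rows m \<union> cols n. c u = a}" for a by (simp add: so'1 G_def)
    have sub: "\<forall>X\<in>range (VY k). G X \<subseteq> univ ?S" by (auto simp: G_def)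
    have cP: "\<forall>u\<in>rows m \<union> cols n. \<forall>a. u \<in> so' G (VY k a) \<longleftrightarrow> c u = a" by (simp add: G1)
    have "sat ?S fo (so' G) (Partition k)" unfolding sat_Partition G1 by auto
    moreover have "sat ?S fo (so' G) (Nontriv k U)" unfolding sat_Nontriv G1 so'2
      using nt U(1) by auto
    moreover have "sat ?S fo (so' G) (Span k d U)"
      using sp span_sem[OF d _ U(2) cP Q(1) so'3, where A=A and fo=fo] U(1) so'2 by simp
    ultimately show "\<exists>G. (\<forall>X\<in>range (VY k). G X \<subseteq> univ ?S) \<and>
     sat ?S fo (so' G) (Conj (Partition k) (Conj (Nontriv k U) (Span k d U)))"
      using sub by auto
  qed
  finally show ?thesis .
qed



definition Subset :: "'f ccvar \<Rightarrow> 'f ccvar \<Rightarrow> ('f,nat,'f ccvar) cmso" where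
  "Subset X Y = AllFO 5 (Imp (AtMem 5 X) (AtMem 5 Y))"
definition SubCols :: "'f ccvar \<Rightarrow> ('f,nat,'f ccvar) cmso" where
  "SubCols X = AllFO 5 (Imp (AtMem 5 X) (AtC 5))"

lemma sat_Subset[simp]: "sat S fo so (Subset X Y) \<longleftrightarrow> (\<forall>u\<in>univ S. u \<in> so X \<longrightarrow> u \<in> so Y)"
  by (simp add: Subset_def)
lemma sat_SubCols[simp]: "sat S fo so (SubCols X) \<longleftrightarrow> (\<forall>u\<in>univ S. u \<in> so X \<longrightarrow> u \<in> relC S)"
  by (simp add: SubCols_def)

lemma ball_sub: "X \<subseteq> W \<Longrightarrow> (\<forall>u\<in>W. u \<in> X \<longrightarrow> u \<in> Y) = (X \<subseteq> Y)" by blast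

definition Circ :: "nat \<Rightarrow> nat \<Rightarrow> 'f::{finite,field} ccvar \<Rightarrow> ('f,nat,'f ccvar) cmso" where
  "Circ k d D = Conj (Subset D VZ) (Conj (SubCols D) (Conj (Dep k d D)
     (AllSO (VB 3) (Imp (Conj (Subset (VB 3) D) (Neg (Subset D (VB 3)))) (Neg (Dep k d (VB 3)))))))"

lemma circ_sem:
  fixes A :: "nat \<Rightarrow> nat \<Rightarrow> 'f::{finite,field}"
  assumes d: "of_nat d = (0::'f)" "d > 0"
  and Q: "\<forall>t<k. virtual_column m (Q t)" "\<forall>t<k. \<forall>a. so (VY t a) = Q t a"
  and T: "so VZ = T" "T \<subseteq> cols n"
  and D: "so (VB 2) \<subseteq> rows m \<union> cols n"
  shows "sat (matStruct m n A) fo so (Circ k d (VB 2)) \<longleftrightarrow> mcircuit m n A k (\<lambda>t. vvec (Q t)) T (so (VB 2))"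
proof (cases "so (VB 2) \<subseteq> cols n")
  case False
  have "\<not> sat (matStruct m n A) fo so (SubCols (VB 2))" using False D by (simp add: ball_sub)
  moreover have "\<not> mcircuit m n A k (\<lambda>t. vvec (Q t)) T (so (VB 2))" using False by (simp add: mcircuit_def)
  ultimately show ?thesis by (simp add: Circ_def)
next
  case True
  let ?D = "so (VB 2)"
  have dep1: "sat (matStruct m n A) fo so (Dep k d (VB 2)) \<longleftrightarrow> mdep m A k (\<lambda>t. vvec (Q t)) ?D"
    by (rule dep_sem[OF d True _ _ Q]) auto
  have dep2: "sat (matStruct m n A) fo (so(VB 3 := D')) (Dep k d (VB 3)) \<longleftrightarrow> mdep m A k (\<lambda>t. vvec (Q t)) D'"
    if "D' \<subseteq> ?D" for D'
  proof -
    have "sat (matStruct m n A) fo (so(VB 3 := D')) (Dep k d (VB 3)) \<longleftrightarrow> mdep m A k (\<lambda>t. vvec (Q t)) ((so(VB 3 := D')) (VB 3))"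
      by (rule dep_sem[OF d _ _ _ Q(1)]) (use that True Q(2) in auto)
    then show ?thesis by simp
  qed
  have "sat (matStruct m n A) fo so (Circ k d (VB 2)) \<longleftrightarrow>
     ?D \<subseteq> T \<and> mdep m A k (\<lambda>t. vvec (Q t)) ?D \<and>
     (\<forall>D'. D' \<subseteq> rows m \<union> cols n \<longrightarrow> D' \<subseteq> ?D \<and> \<not> ?D \<subseteq> D' \<longrightarrow>
        \<not> sat (matStruct m n A) fo (so(VB 3 := D')) (Dep k d (VB 3)))"
    using True D T(1) dep1 unfolding Circ_def by (simp add: ball_sub)
  also have "\<dots> \<longleftrightarrow> ?D \<subseteq> T \<and> mdep m A k (\<lambda>t. vvec (Q t)) ?D \<and>
     (\<forall>D'. D' \<subset> ?D \<longrightarrow> \<not> mdep m A k (\<lambda>t. vvec (Q t)) D')"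
  proof -
    have "(\<forall>D'. D' \<subseteq> rows m \<union> cols n \<longrightarrow> D' \<subseteq> ?D \<and> \<not> ?D \<subseteq> D' \<longrightarrow>
        \<not> sat (matStruct m n A) fo (so(VB 3 := D')) (Dep k d (VB 3))) \<longleftrightarrow>
      (\<forall>D'. D' \<subset> ?D \<longrightarrow> \<not> mdep m A k (\<lambda>t. vvec (Q t)) D')"
    proof
      assume L: "\<forall>D'. D' \<subseteq> rows m \<union> cols n \<longrightarrow> D' \<subseteq> ?D \<and> \<not> ?D \<subseteq> D' \<longrightarrow>
        \<not> sat (matStruct m n A) fo (so(VB 3 := D')) (Dep k d (VB 3))"
      show "\<forall>D'. D' \<subset> ?D \<longrightarrow> \<not> mdep m A k (\<lambda>t. vvec (Q t)) D'"
      proof (intro allI impI)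
        fix D' assume p: "D' \<subset> ?D"
        then have "D' \<subseteq> rows m \<union> cols n" "D' \<subseteq> ?D" "\<not> ?D \<subseteq> D'" using D by auto
        then have "\<not> sat (matStruct m n A) fo (so(VB 3 := D')) (Dep k d (VB 3))" using L by blast
        then show "\<not> mdep m A k (\<lambda>t. vvec (Q t)) D'" using dep2[OF \<open>D' \<subseteq> ?D\<close>] by blast
      qed
    next
      assume R: "\<forall>D'. D' \<subset> ?D \<longrightarrow> \<not> mdep m A k (\<lambda>t. vvec (Q t)) D'"
      show "\<forall>D'. D' \<subseteq> rows m \<union> cols n \<longrightarrow> D' \<subseteq> ?D \<and> \<not> ?D \<subseteq> D' \<longrightarrow>
        \<not> sat (matStruct m n A) fo (so(VB 3 := D')) (Dep k d (VB 3))"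
      proof (intro allI impI)
        fix D' assume "D' \<subseteq> rows m \<union> cols n" and p: "D' \<subseteq> ?D \<and> \<not> ?D \<subseteq> D'"
        then have "D' \<subset> ?D" by blast
        then show "\<not> sat (matStruct m n A) fo (so(VB 3 := D')) (Dep k d (VB 3))"
          using R dep2 p by blast
      qed
    qed
    then show ?thesis by (rule arg_cong2[where f="\<lambda>a b. ?D \<subseteq> T \<and> mdep m A k (\<lambda>t. vvec (Q t)) ?D \<and> b", OF refl])
  qed
  also have "\<dots> \<longleftrightarrow> mcircuit m n A k (\<lambda>t. vvec (Q t)) T ?D"
    using True by (auto simp: mcircuit_def)
  finally show ?thesis .
qed

definition Conn :: "nat \<Rightarrow> nat \<Rightarrow> 'f::{finite,field} ccvar \<Rightarrow> ('f,nat,'f ccvar) cmso" where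
  "Conn k d X = AllFO 0 (AllFO 1 (Imp (Conj (AtMem 0 X) (AtMem 1 X)) (Disj (AtEq 0 1)
     (ExSO (VB 2) (Conj (Circ k d (VB 2)) (Conj (AtMem 0 (VB 2)) (AtMem 1 (VB 2))))))))"

lemma conn_sem:
  fixes A :: "nat \<Rightarrow> nat \<Rightarrow> 'f::{finite,field}"
  assumes d: "of_nat d = (0::'f)" "d > 0"
  and Q: "\<forall>t<k. virtual_column m (Q t)" "\<forall>t<k. \<forall>a. so (VY t a) = Q t a"
  and T: "so VZ = T" "T \<subseteq> cols n"
  and X: "X \<noteq> VB 2" "so X \<subseteq> rows m \<union> cols n"
  shows "sat (matStruct m n A) fo so (Conn k d X) \<longleftrightarrow> mconnected m n A k (\<lambda>t. vvec (Q t)) T (so X)"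
proof -
  have circ: "sat (matStruct m n A) fo' (so(VB 2 := D)) (Circ k d (VB 2)) \<longleftrightarrow>
      mcircuit m n A k (\<lambda>t. vvec (Q t)) T D" if "D \<subseteq> rows m \<union> cols n" for D fo'
  proof -
    have "sat (matStruct m n A) fo' (so(VB 2 := D)) (Circ k d (VB 2)) \<longleftrightarrow>
      mcircuit m n A k (\<lambda>t. vvec (Q t)) T ((so(VB 2 := D)) (VB 2))"
      by (rule circ_sem[OF d Q(1) _ _ T(2)]) (use that Q(2) T(1) in auto)
    then show ?thesis by simp
  qed
  have mc: "mcircuit m n A k (\<lambda>t. vvec (Q t)) T D \<Longrightarrow> D \<subseteq> rows m \<union> cols n" for D
    by (auto simp: mcircuit_def)
  have "sat (matStruct m n A) fo so (Conn k d X) \<longleftrightarrow>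
     (\<forall>x\<in>rows m \<union> cols n. \<forall>y\<in>rows m \<union> cols n. x \<in> so X \<and> y \<in> so X \<longrightarrow> x = y \<or>
        (\<exists>D. D \<subseteq> rows m \<union> cols n \<and> sat (matStruct m n A) (fo(0:=x, 1:=y)) (so(VB 2 := D)) (Circ k d (VB 2))
            \<and> x \<in> D \<and> y \<in> D))"
    using X(1) by (simp add: Conn_def)
  also have "\<dots> \<longleftrightarrow> (\<forall>x\<in>rows m \<union> cols n. \<forall>y\<in>rows m \<union> cols n. x \<in> so X \<and> y \<in> so X \<longrightarrow> x = y \<or>
        (\<exists>D. mcircuit m n A k (\<lambda>t. vvec (Q t)) T D \<and> x \<in> D \<and> y \<in> D))"
  proof -
    have ex: "(\<exists>D. D \<subseteq> rows m \<union> cols n \<and> sat (matStruct m n A) (fo(0:=x, 1:=y)) (so(VB 2 := D)) (Circ k d (VB 2))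
            \<and> x \<in> D \<and> y \<in> D) \<longleftrightarrow> (\<exists>D. mcircuit m n A k (\<lambda>t. vvec (Q t)) T D \<and> x \<in> D \<and> y \<in> D)" for x y
    proof
      assume "\<exists>D. D \<subseteq> rows m \<union> cols n \<and> sat (matStruct m n A) (fo(0:=x, 1:=y)) (so(VB 2 := D)) (Circ k d (VB 2))
            \<and> x \<in> D \<and> y \<in> D"
      then obtain D where D: "D \<subseteq> rows m \<union> cols n" "sat (matStruct m n A) (fo(0:=x, 1:=y)) (so(VB 2 := D)) (Circ k d (VB 2))"
        "x \<in> D" "y \<in> D" by blast
      have "mcircuit m n A k (\<lambda>t. vvec (Q t)) T D" using D(2) unfolding circ[OF D(1)] .
      then show "\<exists>D. mcircuit m n A k (\<lambda>t. vvec (Q t)) T D \<and> x \<in> D \<and> y \<in> D" using D(3,4) by blast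
    next
      assume "\<exists>D. mcircuit m n A k (\<lambda>t. vvec (Q t)) T D \<and> x \<in> D \<and> y \<in> D"
      then obtain D where D: "mcircuit m n A k (\<lambda>t. vvec (Q t)) T D" "x \<in> D" "y \<in> D" by blast
      have D1: "D \<subseteq> rows m \<union> cols n" using mc[OF D(1)] .
      have "sat (matStruct m n A) (fo(0:=x, 1:=y)) (so(VB 2 := D)) (Circ k d (VB 2))" unfolding circ[OF D1] by (rule D(1))
      then show "\<exists>D. D \<subseteq> rows m \<union> cols n \<and> sat (matStruct m n A) (fo(0:=x, 1:=y)) (so(VB 2 := D)) (Circ k d (VB 2))
            \<and> x \<in> D \<and> y \<in> D" using D1 D(2,3) by blast
    qed
    show ?thesis by (simp only: ex)
  qed
  also have "\<dots> \<longleftrightarrow> mconnected m n A k (\<lambda>t. vvec (Q t)) T (so X)"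
    using X(2) by (auto simp: mconnected_def)
  finally show ?thesis .
qed

definition CC :: "nat \<Rightarrow> nat \<Rightarrow> ('f::{finite,field},nat,'f ccvar) cmso" where
  "CC k d = Conj (ExFO 6 (AtMem 6 VX)) (Conj (Subset VX VZ) (Conj (Conn k d VX)
     (AllSO (VB 1) (Imp (Conj (Subset VX (VB 1)) (Conj (Subset (VB 1) VZ) (Conn k d (VB 1))))
        (Subset (VB 1) VX)))))"

lemma cc_sem:
  fixes A :: "nat \<Rightarrow> nat \<Rightarrow> 'f::{finite,field}"
  assumes d: "of_nat d = (0::'f)" "d > 0"
  and Q: "\<forall>t<k. virtual_column m (Q t)" "\<forall>t<k. \<forall>a. so (VY t a) = Q t a"
  and ST: "S \<subseteq> T" "T \<subseteq> cols n" "so VX = S" "so VZ = T"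
  shows "sat (matStruct m n A) fo so (CC k d) \<longleftrightarrow> conn_component m n A k (\<lambda>t. vvec (Q t)) T S"
proof -
  have c1: "sat (matStruct m n A) fo so (Conn k d VX) \<longleftrightarrow> mconnected m n A k (\<lambda>t. vvec (Q t)) T S"
    using conn_sem[OF d Q ST(4) ST(2), of VX] ST by auto
  have c2: "sat (matStruct m n A) fo (so(VB 1 := S')) (Conn k d (VB 1)) \<longleftrightarrow> mconnected m n A k (\<lambda>t. vvec (Q t)) T S'"
    if "S' \<subseteq> rows m \<union> cols n" for S'
  proof -
    have "sat (matStruct m n A) fo (so(VB 1 := S')) (Conn k d (VB 1)) \<longleftrightarrow> mconnected m n A k (\<lambda>t. vvec (Q t)) T ((so(VB 1 := S')) (VB 1))"
      by (rule conn_sem[OF d Q(1) _ _ ST(2)]) (use that Q(2) ST(4) in auto)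
    then show ?thesis by simp
  qed
  have sub: "S \<subseteq> rows m \<union> cols n" "T \<subseteq> rows m \<union> cols n" using ST by auto
  have "sat (matStruct m n A) fo so (CC k d) \<longleftrightarrow> S \<noteq> {} \<and> mconnected m n A k (\<lambda>t. vvec (Q t)) T S \<and>
     (\<forall>S'. S' \<subseteq> rows m \<union> cols n \<longrightarrow> S \<subseteq> S' \<and> S' \<subseteq> T \<and>
         sat (matStruct m n A) fo (so(VB 1 := S')) (Conn k d (VB 1)) \<longrightarrow> S' \<subseteq> S)"
  proof -
    have ne: "(\<exists>u\<in>rows m \<union> cols n. u \<in> S) \<longleftrightarrow> S \<noteq> {}" using sub by blast
    show ?thesis using sub ST c1 unfolding CC_def by (simp add: ball_sub ne)
  qed
  also have "\<dots> \<longleftrightarrow> S \<noteq> {} \<and> mconnected m n A k (\<lambda>t. vvec (Q t)) T S \<and>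
     (\<forall>S'. S \<subseteq> S' \<and> S' \<subseteq> T \<and> mconnected m n A k (\<lambda>t. vvec (Q t)) T S' \<longrightarrow> S' = S)"
  proof -
    have "(\<forall>S'. S' \<subseteq> rows m \<union> cols n \<longrightarrow> S \<subseteq> S' \<and> S' \<subseteq> T \<and>
         sat (matStruct m n A) fo (so(VB 1 := S')) (Conn k d (VB 1)) \<longrightarrow> S' \<subseteq> S) \<longleftrightarrow>
      (\<forall>S'. S \<subseteq> S' \<and> S' \<subseteq> T \<and> mconnected m n A k (\<lambda>t. vvec (Q t)) T S' \<longrightarrow> S' = S)"
    proof
      assume L: "\<forall>S'. S' \<subseteq> rows m \<union> cols n \<longrightarrow> S \<subseteq> S' \<and> S' \<subseteq> T \<and>
         sat (matStruct m n A) fo (so(VB 1 := S')) (Conn k d (VB 1)) \<longrightarrow> S' \<subseteq> S"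
      show "\<forall>S'. S \<subseteq> S' \<and> S' \<subseteq> T \<and> mconnected m n A k (\<lambda>t. vvec (Q t)) T S' \<longrightarrow> S' = S"
      proof (intro allI impI)
        fix S' assume p: "S \<subseteq> S' \<and> S' \<subseteq> T \<and> mconnected m n A k (\<lambda>t. vvec (Q t)) T S'"
        then have u: "S' \<subseteq> rows m \<union> cols n" using sub by blast
        then have "sat (matStruct m n A) fo (so(VB 1 := S')) (Conn k d (VB 1))" using c2 p by blast
        then have "S' \<subseteq> S" using L p u by blast
        then show "S' = S" using p by blast
      qed
    next
      assume R: "\<forall>S'. S \<subseteq> S' \<and> S' \<subseteq> T \<and> mconnected m n A k (\<lambda>t. vvec (Q t)) T S' \<longrightarrow> S' = S"
      show "\<forall>S'. S' \<subseteq> rows m \<union> cols n \<longrightarrow> S \<subseteq> S' \<and> S' \<subseteq> T \<and>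
         sat (matStruct m n A) fo (so(VB 1 := S')) (Conn k d (VB 1)) \<longrightarrow> S' \<subseteq> S"
      proof (intro allI impI)
        fix S' assume u: "S' \<subseteq> rows m \<union> cols n" and p: "S \<subseteq> S' \<and> S' \<subseteq> T \<and>
         sat (matStruct m n A) fo (so(VB 1 := S')) (Conn k d (VB 1))"
        then have "mconnected m n A k (\<lambda>t. vvec (Q t)) T S'" using c2 by blast
        then have "S' = S" using R p by blast
        then show "S' \<subseteq> S" by simp
      qed
    qed
    then show ?thesis by (rule arg_cong2[where f="\<lambda>a b. S \<noteq> {} \<and> mconnected m n A k (\<lambda>t. vvec (Q t)) T S \<and> b", OF refl])
  qed
  also have "\<dots> \<longleftrightarrow> conn_component m n A k (\<lambda>t. vvec (Q t)) T S"
    using ST by (auto simp: conn_component_def)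
  finally show ?thesis .
qed

theorem lemma10:
  fixes k :: nat
  shows "\<exists>\<phi> :: ('f::{finite,field}, nat, 'f ccvar) cmso.
    \<forall>(m::nat) (n::nat) (A :: nat \<Rightarrow> nat \<Rightarrow> 'f) (S :: elt set) (T :: elt set)
      (Q :: nat \<Rightarrow> 'f \<Rightarrow> elt set) (fo :: nat \<Rightarrow> elt) (so :: 'f ccvar \<Rightarrow> elt set).
      S \<subseteq> T \<longrightarrow> T \<subseteq> cols n \<longrightarrow> (\<forall>i<k. virtual_column m (Q i)) \<longrightarrow>
      so VX = S \<longrightarrow> so VZ = T \<longrightarrow> (\<forall>i<k. \<forall>a. so (VY i a) = Q i a) \<longrightarrow>
      (sat (matStruct m n A) fo so \<phi> \<longleftrightarrow>
         conn_component m n A k (\<lambda>i. vvec (Q i)) T S)"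
proof -
  obtain d where d: "d > 0" "of_nat d = (0::'f)" using char_exists by blast
  show ?thesis
    by (rule exI[of _ "CC k d"]) (auto simp: cc_sem[OF d(2) d(1)])
qed


end
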